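(* Let $n\ge2$ and let $X_1,\dots,X_n$ be unbounded balleans, $X=\prod_{i=1}^nX_i$. (a) If $X$ is normal, then the bornology $\mathcal B_X$ has a linearly ordered base. (b) If each $X_i$ is $\operatorname{cof}$-regular and $\mathcal B_X$ has a linearly ordered base, then $X$ is normal.
   Context: A ballean is a pair $(X,\mathcal E_X)$ where $X$ is a set and $\mathcal E_X$ is a family of subsets of $X\times X$ (entourages) such that: each $E\in\mathcal E_X$ contains the diagonal $\Delta_X$; for any $E,F\in\mathcal E_X$ there is $D\in\mathcal E_X$ with $E\circ F^{-1}\subset D$; and $\bigcup\mathcal E_X=X\times X$. For $E\in\mathcal E_X$, $x\in X$, $A\subset X$: $E[x]=\{y:(x,y)\in E\}$, $E[A]=\bigcup_{a\in A}E[a]$. $B\subset X$ is bounded if $B\subset E[x]$ for some $E\in\mathcal E_X$, $x\in X$; $\mathcal B_X$ is the family of bounded sets (bornology); $X$ is unbounded if $X\notin\mathcal B_X$. Sets $A,B$ are asymptotically disjoint if $E[A]\cap E[B]\in\mathcal B_X$ for all $E\in\mathcal E_X$; $U$ is an asymptotic neighborhood of $A$ if $E[A]\setminus U\in\mathcal B_X$ for all $E$; $X$ is normal if any two asymptotically disjoint sets have disjoint asymptotic neighborhoods. The product $\prod_{i=1}^n X_i$ has entourages $\{((x_i)_i,(y_i)_i):(x_i,y_i)\in E_i\ \forall i\}$ for $E_i\in\mathcal E_{X_i}$. A linearly ordered base of a bornology is a subfamily linearly ordered by inclusion such that each bounded set is contained in a member of it. For a poset $P$, $\operatorname{cof}(P)$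 is the least cardinality of a cofinal subset (equal to $1$ if $P$ has a largest element). A ballean $X$ is $\operatorname{cof}$-regular if $\operatorname{cof}(\mathcal E_X)=\operatorname{cof}(\mathcal B_X)$, where both families are ordered by inclusion. *)

theory Defs
  imports Main "HOL-Library.Equipollence"
begin

definition ballean :: "'a set \<Rightarrow> ('a \<times> 'a) set set \<Rightarrow> bool" where
  "ballean X Ent \<longleftrightarrow>
     (\<forall>E\<in>Ent. E \<subseteq> X \<times> X \<and> Id_on X \<subseteq> E) \<and>
     (\<forall>E\<in>Ent. \<forall>F\<in>Ent. \<exists>D\<in>Ent. E O F\<inverse> \<subseteq> D) \<and>
     \<Union>Ent = X \<times> X"

definition bornology :: "'a set \<Rightarrow> ('a \<times> 'a) set set \<Rightarrow> 'a set set" where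
  "bornology X Ent = {B. B \<subseteq> X \<and> (\<exists>E\<in>Ent. \<exists>x\<in>X. B \<subseteq> E `` {x})}"

definition unbounded :: "'a set \<Rightarrow> ('a \<times> 'a) set set \<Rightarrow> bool" where
  "unbounded X Ent \<longleftrightarrow> X \<notin> bornology X Ent"

definition asymp_disjoint :: "'a set \<Rightarrow> ('a \<times> 'a) set set \<Rightarrow> 'a set \<Rightarrow> 'a set \<Rightarrow> bool" where
  "asymp_disjoint X Ent A B \<longleftrightarrow> (\<forall>E\<in>Ent. E `` A \<inter> E `` B \<in> bornology X Ent)"

definition asymp_nbhd :: "'a set \<Rightarrow> ('a \<times> 'a) set set \<Rightarrow> 'a set \<Rightarrow> 'a set \<Rightarrow> bool" where
  "asymp_nbhd X Ent U A \<longleftrightarrow> (\<forall>E\<in>Ent. E `` A - U \<in> bornology X Ent)"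

definition normal_ballean :: "'a set \<Rightarrow> ('a \<times> 'a) set set \<Rightarrow> bool" where
  "normal_ballean X Ent \<longleftrightarrow>
     (\<forall>A B. A \<subseteq> X \<longrightarrow> B \<subseteq> X \<longrightarrow> asymp_disjoint X Ent A B \<longrightarrow>
        (\<exists>U V. U \<subseteq> X \<and> V \<subseteq> X \<and> asymp_nbhd X Ent U A \<and> asymp_nbhd X Ent V B \<and> U \<inter> V = {}))"

definition has_linear_base :: "'a set set \<Rightarrow> bool" where
  "has_linear_base \<B> \<longleftrightarrow>
     (\<exists>L\<subseteq>\<B>. (\<forall>a\<in>L. \<forall>b\<in>L. a \<subseteq> b \<or> b \<subseteq> a) \<and> (\<forall>B\<in>\<B>. \<exists>l\<in>L. B \<subseteq> l))"

definition cofinal :: "'b set set \<Rightarrow> 'b set set \<Rightarrow> bool" where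
  "cofinal C P \<longleftrightarrow> C \<subseteq> P \<and> (\<forall>p\<in>P. \<exists>c\<in>C. p \<subseteq> c)"

text \<open>C is a cofinal subset of P of least cardinality, so its cardinality is cof(P).\<close>
definition min_cofinal :: "'b set set \<Rightarrow> 'b set set \<Rightarrow> bool" where
  "min_cofinal C P \<longleftrightarrow> cofinal C P \<and> (\<forall>C'. cofinal C' P \<longrightarrow> C \<lesssim> C')"

definition same_cof :: "'b set set \<Rightarrow> 'c set set \<Rightarrow> bool" where
  "same_cof P Q \<longleftrightarrow> (\<exists>C D. min_cofinal C P \<and> min_cofinal D Q \<and> C \<approx> D)"

definition cof_regular :: "'a set \<Rightarrow> ('a \<times> 'a) set set \<Rightarrow> bool" where
  "cof_regular X Ent \<longleftrightarrow> same_cof Ent (bornology X Ent)"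

definition prod_carrier :: "nat \<Rightarrow> (nat \<Rightarrow> 'a set) \<Rightarrow> (nat \<Rightarrow> 'a) set" where
  "prod_carrier n Xs = PiE {..<n} Xs"

definition prod_ent :: "nat \<Rightarrow> (nat \<Rightarrow> 'a set) \<Rightarrow> (nat \<Rightarrow> ('a \<times> 'a) set) \<Rightarrow> ((nat \<Rightarrow> 'a) \<times> (nat \<Rightarrow> 'a)) set" where
  "prod_ent n Xs Es = {(x, y). x \<in> prod_carrier n Xs \<and> y \<in> prod_carrier n Xs \<and> (\<forall>i<n. (x i, y i) \<in> Es i)}"

definition prod_ents :: "nat \<Rightarrow> (nat \<Rightarrow> 'a set) \<Rightarrow> (nat \<Rightarrow> ('a \<times> 'a) set set) \<Rightarrow> ((nat \<Rightarrow> 'a) \<times> (nat \<Rightarrow> 'a)) set set" where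
  "prod_ents n Xs Ents = {prod_ent n Xs Es | Es. \<forall>i<n. Es i \<in> Ents i}"

end

theory Submission
  imports Defs
begin


lemma lepoll_card: "A \<lesssim> B \<longleftrightarrow> (card_of A, card_of B) \<in> ordLeq"
  by (simp add: lepoll_def card_of_ordLeq[symmetric])

lemma lepoll_total: "A \<lesssim> B \<or> B \<lesssim> A"
  using ordLeq_total[OF card_of_Well_order card_of_Well_order] unfolding lepoll_card by blast

lemma exists_min_lepoll:
  assumes "P C"
  shows "\<exists>M. P M \<and> (\<forall>C'. P C' \<longrightarrow> M \<lesssim> C')"
proof -
  let ?R = "{card_of C | C. P C}"
  have "?R \<noteq> {}" using assms by blast
  moreover have "\<forall>r\<in>?R. card_order_on (Field r) r" using card_of_Card_order by blast
  ultimately obtain r where r: "r \<in> ?R" "\<forall>r'\<in>?R. (r, r') \<in> ordLeq"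
    using exists_minim_Card_order[of ?R] by blast
  then obtain M where "r = card_of M" "P M" by blast
  thus ?thesis using r unfolding lepoll_card by blast
qed

lemma infinite_times_lepoll: "infinite M \<Longrightarrow> M \<times> M \<lesssim> M"
  using card_of_Times_same_infinite[of M] unfolding lepoll_card ordIso_iff_ordLeq by blast

lemma lepoll_finite_imp: "A \<lesssim> B \<Longrightarrow> finite B \<Longrightarrow> finite A"
  unfolding lepoll_def using finite_imageD finite_subset by metis

lemma underS_small:
  assumes "infinite M" "a \<in> M"
  shows "\<not> M \<lesssim> insert a (underS (card_of M) a)"
proof
  assume h: "M \<lesssim> insert a (underS (card_of M) a)"
  have "(card_of (underS (card_of M) a), card_of M) \<in> ordLess"
    using card_of_underS[OF card_of_Card_order, of a M] assms by (simp add: Field_card_of)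
  hence nl: "\<not> M \<lesssim> underS (card_of M) a"
    using not_ordLeq_iff_ordLess[OF card_of_Well_order card_of_Well_order] unfolding lepoll_card by blast
  show False
  proof (cases "finite (underS (card_of M) a)")
    case True
    then have "finite (insert a (underS (card_of M) a))" by simp
    then show ?thesis using h assms(1) lepoll_finite_imp by blast
  next
    case False
    then have "insert a (underS (card_of M) a) \<approx> underS (card_of M) a" by (rule infinite_insert_eqpoll)
    then show ?thesis using h nl lepoll_trans2 by blast
  qed
qed

lemma wo_M: "well_order_on M (card_of M)" "Field (card_of M) = M"
  using card_of_Well_order[of M] by (simp_all add: Field_card_of)

lemma M_total: "a \<in> M \<Longrightarrow> b \<in> M \<Longrightarrow> a = b \<or> a \<in> underS (card_of M) b \<or> b \<in> underS (card_of M) a"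
  using card_of_Well_order[of M] unfolding well_order_on_def linear_order_on_def total_on_def underS_def
  by (auto simp: Field_card_of)

lemma M_wf: "wf ( (card_of M) - Id)"
  using card_of_Well_order[of M] unfolding well_order_on_def by blast

lemma M_underS: "(b, a) \<in> (card_of M) - Id \<longleftrightarrow> b \<in> underS (card_of M) a"
  unfolding underS_def by auto

lemma M_underS_in: "b \<in> underS (card_of M) a \<Longrightarrow> b \<in> M"
  unfolding underS_def using Field_card_of[of M] by (auto simp: Field_def)

lemma finite_power_lepoll:
  assumes "infinite M"
  shows "PiE {..<k::nat} (\<lambda>_. M) \<lesssim> M"
proof (induction k)
  case 0
  have "M \<noteq> {}" using assms by auto
  then obtain m where "m \<in> M" by auto
  have "PiE {..<0::nat} (\<lambda>_. M) \<subseteq> (\<lambda>_. (\<lambda>_. undefined)) ` M" using \<open>m\<in>M\<close> by auto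
  then show ?case using subset_image_lepoll by blast
next
  case (Suc k)
  have inj: "inj_on (\<lambda>f. (f(k:=undefined), f k)) (PiE {..<Suc k} (\<lambda>_. M))"
  proof (rule inj_onI)
    fix f g assume "(f(k:=undefined), f k) = (g(k:=undefined), g k)"
    then have "f(k:=undefined) = g(k:=undefined)" "f k = g k" by auto
    then show "f = g" by (metis fun_upd_triv fun_upd_upd)
  qed
  have img: "(\<lambda>f. (f(k:=undefined), f k)) ` (PiE {..<Suc k} (\<lambda>_. M)) \<subseteq> PiE {..<k} (\<lambda>_. M) \<times> M"
    by (auto simp: PiE_def Pi_def extensional_def)
  have "PiE {..<Suc k} (\<lambda>_. M) \<lesssim> PiE {..<k} (\<lambda>_. M) \<times> M"
    using inj img unfolding lepoll_def by blast
  also have "\<dots> \<lesssim> M \<times> M" using Suc times_lepoll_mono by blast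
  also have "\<dots> \<lesssim> M" using infinite_times_lepoll[OF assms] .
  finally show ?case .
qed



lemma bl_sub: "ballean X Ent \<Longrightarrow> E \<in> Ent \<Longrightarrow> E \<subseteq> X \<times> X"
  unfolding ballean_def by blast

lemma bl_id: "ballean X Ent \<Longrightarrow> E \<in> Ent \<Longrightarrow> x \<in> X \<Longrightarrow> (x, x) \<in> E"
  unfolding ballean_def by blast

lemma bl_comp: "ballean X Ent \<Longrightarrow> E \<in> Ent \<Longrightarrow> F \<in> Ent \<Longrightarrow> \<exists>D\<in>Ent. E O F\<inverse> \<subseteq> D"
  unfolding ballean_def by blast

lemma bl_conv:
  assumes b: "ballean X Ent" and E: "E \<in> Ent"
  shows "\<exists>D\<in>Ent. E\<inverse> \<subseteq> D"
proof -
  obtain D where D: "D \<in> Ent" "E O E\<inverse> \<subseteq> D" using bl_comp[OF b E E] by blast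
  have "E\<inverse> \<subseteq> E O E\<inverse>"
  proof
    fix z assume z: "z \<in> E\<inverse>"
    then obtain x y where xy: "z = (x, y)" "(y, x) \<in> E" by auto
    then have "x \<in> X" using bl_sub[OF b E] by auto
    then have "(x, x) \<in> E" using bl_id[OF b E] by auto
    then show "z \<in> E O E\<inverse>" using xy by auto
  qed
  then show ?thesis using D by blast
qed

lemma bl_O:
  assumes b: "ballean X Ent" and E: "E \<in> Ent" and F: "F \<in> Ent"
  shows "\<exists>D\<in>Ent. E O F \<subseteq> D"
proof -
  obtain F' where F': "F' \<in> Ent" "F\<inverse> \<subseteq> F'" using bl_conv[OF b F] by blast
  obtain D where D: "D \<in> Ent" "E O F'\<inverse> \<subseteq> D" using bl_comp[OF b E F'(1)] by blast
  have "E O F \<subseteq> E O F'\<inverse>" using F'(2) by auto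
  then show ?thesis using D by blast
qed

lemma bl_un:
  assumes b: "ballean X Ent" and E: "E \<in> Ent" and F: "F \<in> Ent"
  shows "\<exists>D\<in>Ent. E \<union> F \<subseteq> D"
proof -
  obtain F' where F': "F' \<in> Ent" "F\<inverse> \<subseteq> F'" using bl_conv[OF b F] by blast
  obtain D where D: "D \<in> Ent" "E O F'\<inverse> \<subseteq> D" using bl_comp[OF b E F'(1)] by blast
  have "E \<subseteq> E O F'\<inverse>"
  proof
    fix z assume z: "z \<in> E"
    then obtain x y where xy: "z = (x, y)" by (cases z) auto
    then have "y \<in> X" using bl_sub[OF b E] z by auto
    then have "(y, y) \<in> F'" using bl_id[OF b F'(1)] by auto
    then show "z \<in> E O F'\<inverse>" using xy z by auto
  qed
  moreover have "F \<subseteq> E O F'\<inverse>"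
  proof
    fix z assume z: "z \<in> F"
    then obtain x y where xy: "z = (x, y)" by (cases z) auto
    then have "x \<in> X" using bl_sub[OF b F] z by auto
    then have "(x, x) \<in> E" using bl_id[OF b E] by auto
    moreover have "(y, x) \<in> F'" using F'(2) z xy by auto
    ultimately show "z \<in> E O F'\<inverse>" using xy by auto
  qed
  ultimately show ?thesis using D by blast
qed

lemma bl_pair: "ballean X Ent \<Longrightarrow> x \<in> X \<Longrightarrow> y \<in> X \<Longrightarrow> \<exists>E\<in>Ent. (x, y) \<in> E"
  unfolding ballean_def by blast

lemma bl_bdd_at:
  assumes b: "ballean X Ent" and B: "B \<in> bornology X Ent" and p: "p \<in> X"
  shows "\<exists>E\<in>Ent. B \<subseteq> E `` {p}"
proof -
  obtain E x where E: "E \<in> Ent" "x \<in> X" "B \<subseteq> E `` {x}" using B unfolding bornology_def by blast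
  obtain F where F: "F \<in> Ent" "(p, x) \<in> F" using bl_pair[OF b p E(2)] by blast
  obtain D where D: "D \<in> Ent" "F O E \<subseteq> D" using bl_O[OF b F(1) E(1)] by blast
  have "B \<subseteq> D `` {p}" using E(3) F(2) D(2) by blast
  then show ?thesis using D(1) by blast
qed

lemma bl_ball_bdd: "ballean X Ent \<Longrightarrow> E \<in> Ent \<Longrightarrow> p \<in> X \<Longrightarrow> E `` {p} \<in> bornology X Ent"
  unfolding bornology_def using bl_sub by blast

lemma bl_sub_bdd: "B \<in> bornology X Ent \<Longrightarrow> C \<subseteq> B \<Longrightarrow> C \<in> bornology X Ent"
  unfolding bornology_def by blast

lemma bl_img_bdd:
  assumes b: "ballean X Ent" and B: "B \<in> bornology X Ent" and E: "E \<in> Ent"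
  shows "E `` B \<in> bornology X Ent"
proof -
  obtain F x where F: "F \<in> Ent" "x \<in> X" "B \<subseteq> F `` {x}" using B unfolding bornology_def by blast
  obtain D where D: "D \<in> Ent" "F O E \<subseteq> D" using bl_O[OF b F(1) E] by blast
  have "E `` B \<subseteq> D `` {x}" using F(3) D(2) by blast
  moreover have "E `` B \<subseteq> X" using bl_sub[OF b E] by blast
  ultimately show ?thesis unfolding bornology_def using D(1) F(2) by blast
qed

lemma prod_ent_sub: "prod_ent n Xs Es \<subseteq> prod_carrier n Xs \<times> prod_carrier n Xs"
  unfolding prod_ent_def by blast

lemma prod_ent_mono: "(\<And>i. i < n \<Longrightarrow> Es i \<subseteq> Fs i) \<Longrightarrow> prod_ent n Xs Es \<subseteq> prod_ent n Xs Fs"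
  unfolding prod_ent_def by blast

lemma prod_ent_img:
  assumes x: "x \<in> prod_carrier n Xs" and sub: "\<And>i. i < n \<Longrightarrow> Es i \<subseteq> Xs i \<times> Xs i"
  shows "prod_ent n Xs Es `` {x} = PiE {..<n} (\<lambda>i. Es i `` {x i})"
proof
  show "prod_ent n Xs Es `` {x} \<subseteq> PiE {..<n} (\<lambda>i. Es i `` {x i})"
    unfolding prod_ent_def prod_carrier_def by (auto simp: PiE_def Pi_def)
  show "PiE {..<n} (\<lambda>i. Es i `` {x i}) \<subseteq> prod_ent n Xs Es `` {x}"
  proof
    fix y assume y: "y \<in> PiE {..<n} (\<lambda>i. Es i `` {x i})"
    then have "\<forall>i<n. (x i, y i) \<in> Es i" by auto
    moreover then have "y \<in> prod_carrier n Xs" using y sub unfolding prod_carrier_def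
      by (auto simp: PiE_def Pi_def)
    ultimately show "y \<in> prod_ent n Xs Es `` {x}" using x unfolding prod_ent_def by blast
  qed
qed

lemma prod_ballean:
  assumes b: "\<forall>i<n. ballean (Xs i) (Ents i)"
  shows "ballean (prod_carrier n Xs) (prod_ents n Xs Ents)"
proof -
have h1: "\<forall>E\<in>prod_ents n Xs Ents. E \<subseteq> prod_carrier n Xs \<times> prod_carrier n Xs \<and> Id_on (prod_carrier n Xs) \<subseteq> E"
proof
  fix E assume "E \<in> prod_ents n Xs Ents"
  then obtain Es where E: "E = prod_ent n Xs Es" "\<forall>i<n. Es i \<in> Ents i" unfolding prod_ents_def by blast
  show "E \<subseteq> prod_carrier n Xs \<times> prod_carrier n Xs \<and> Id_on (prod_carrier n Xs) \<subseteq> E"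
  proof
    show "E \<subseteq> prod_carrier n Xs \<times> prod_carrier n Xs" using E prod_ent_sub by blast
    show "Id_on (prod_carrier n Xs) \<subseteq> E"
    proof
      fix z assume "z \<in> Id_on (prod_carrier n Xs)"
      then obtain x where x: "z = (x, x)" "x \<in> prod_carrier n Xs" by auto
      then have "\<forall>i<n. (x i, x i) \<in> Es i" using E b bl_id unfolding prod_carrier_def by fastforce
      then show "z \<in> E" using x E unfolding prod_ent_def by blast
    qed
  qed
qed
have h2: "\<forall>E\<in>prod_ents n Xs Ents. \<forall>F\<in>prod_ents n Xs Ents. \<exists>D\<in>prod_ents n Xs Ents. E O F\<inverse> \<subseteq> D"
proof (intro ballI)
  fix E F assume "E \<in> prod_ents n Xs Ents" "F \<in> prod_ents n Xs Ents"
  then obtain Es Fs where E: "E = prod_ent n Xs Es" "\<forall>i<n. Es i \<in> Ents i"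
    and F: "F = prod_ent n Xs Fs" "\<forall>i<n. Fs i \<in> Ents i" unfolding prod_ents_def by blast
  have "\<forall>i. \<exists>D. i < n \<longrightarrow> D \<in> Ents i \<and> Es i O (Fs i)\<inverse> \<subseteq> D"
    using E F b bl_comp by meson
  then obtain Ds where Ds: "\<And>i. i < n \<Longrightarrow> Ds i \<in> Ents i \<and> Es i O (Fs i)\<inverse> \<subseteq> Ds i" by metis
  have "prod_ent n Xs Ds \<in> prod_ents n Xs Ents" using Ds unfolding prod_ents_def by blast
  moreover have "E O F\<inverse> \<subseteq> prod_ent n Xs Ds"
    using Ds unfolding E F prod_ent_def by blast
  ultimately show "\<exists>D\<in>prod_ents n Xs Ents. E O F\<inverse> \<subseteq> D" by blast
qed
have h3: "\<Union> (prod_ents n Xs Ents) = prod_carrier n Xs \<times> prod_carrier n Xs"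
  proof
    show "\<Union> (prod_ents n Xs Ents) \<subseteq> prod_carrier n Xs \<times> prod_carrier n Xs"
      unfolding prod_ents_def using prod_ent_sub by blast
    show "prod_carrier n Xs \<times> prod_carrier n Xs \<subseteq> \<Union> (prod_ents n Xs Ents)"
    proof
      fix z assume "z \<in> prod_carrier n Xs \<times> prod_carrier n Xs"
      then obtain x y where xy: "z = (x, y)" "x \<in> prod_carrier n Xs" "y \<in> prod_carrier n Xs" by auto
      have "\<forall>i. \<exists>E. i < n \<longrightarrow> E \<in> Ents i \<and> (x i, y i) \<in> E"
        using xy b bl_pair unfolding prod_carrier_def by (metis PiE_mem lessThan_iff)
      then obtain Es where Es: "\<And>i. i < n \<Longrightarrow> Es i \<in> Ents i \<and> (x i, y i) \<in> Es i" by metis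
      have "prod_ent n Xs Es \<in> prod_ents n Xs Ents" using Es unfolding prod_ents_def by blast
      moreover have "z \<in> prod_ent n Xs Es" using Es xy unfolding prod_ent_def by blast
      ultimately show "z \<in> \<Union> (prod_ents n Xs Ents)" by blast
    qed
  qed
show ?thesis unfolding ballean_def using h1 h2 h3 by blast
qed



lemma abstract_chain:
  fixes T :: "'b set" and le0 leY :: "'b \<Rightarrow> 'b \<Rightarrow> bool" and f g :: "'b \<Rightarrow> 'b"
  assumes refl0: "\<forall>x\<in>T. le0 x x" and reflY: "\<forall>x\<in>T. leY x x"
    and trans0: "\<forall>x y z. le0 x y \<longrightarrow> le0 y z \<longrightarrow> le0 x z"
    and transY: "\<forall>x y z. leY x y \<longrightarrow> leY y z \<longrightarrow> leY x z"
    and dir: "\<forall>x\<in>T. \<forall>y\<in>T. \<exists>u\<in>T. le0 x u \<and> leY x u \<and> le0 y u \<and> leY y u"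
    and nomax0: "\<forall>x\<in>T. \<exists>y\<in>T. \<not> le0 y x"
    and nomaxY: "\<forall>x\<in>T. \<exists>y\<in>T. \<not> leY y x"
    and fT: "\<forall>x\<in>T. f x \<in> T" and gT: "\<forall>x\<in>T. g x \<in> T"
    and dich: "\<forall>E\<in>T. \<forall>F\<in>T. le0 F (f E) \<or> leY E (g F)"
    and ne: "T \<noteq> {}"
  shows "\<exists>C\<subseteq>T. (\<forall>x\<in>C. \<forall>y\<in>C. (le0 x y \<and> leY x y) \<or> (le0 y x \<and> leY y x))
              \<and> (\<forall>x\<in>T. \<exists>c\<in>C. le0 x c \<and> leY x c)"
proof -
  define cof0 where "cof0 C \<longleftrightarrow> C \<subseteq> T \<and> (\<forall>x\<in>T. \<exists>c\<in>C. le0 x c)" for C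
  define cofY where "cofY C \<longleftrightarrow> C \<subseteq> T \<and> (\<forall>x\<in>T. \<exists>c\<in>C. leY x c)" for C
  define cofB where "cofB C \<longleftrightarrow> C \<subseteq> T \<and> (\<forall>x\<in>T. \<exists>c\<in>C. le0 x c \<and> leY x c)" for C
  have finbd: "finite C \<Longrightarrow> C \<subseteq> T \<Longrightarrow> \<exists>u\<in>T. \<forall>c\<in>C. le0 c u \<and> leY c u" for C
  proof (induction C rule: finite_induct)
    case empty then show ?case using ne by blast
  next
    case (insert x F)
    then obtain u where u: "u \<in> T" "\<forall>c\<in>F. le0 c u \<and> leY c u" by blast
    obtain w where w: "w \<in> T" "le0 x w" "leY x w" "le0 u w" "leY u w"
      using dir insert.prems u(1) by blast
    show ?case using w u trans0 transY by blast
  qed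
  have inf0: "cof0 C \<Longrightarrow> infinite C" for C
  proof
    assume c: "cof0 C" and fin: "finite C"
    obtain u where u: "u \<in> T" "\<forall>c\<in>C. le0 c u \<and> leY c u" using finbd[OF fin] c unfolding cof0_def by blast
    obtain y where y: "y \<in> T" "\<not> le0 y u" using nomax0 u(1) by blast
    obtain c where "c \<in> C" "le0 y c" using c y(1) unfolding cof0_def by blast
    then show False using u y trans0 by blast
  qed
  have gcof: "cof0 C \<Longrightarrow> cofY (g ` C)" for C
  proof -
    assume c: "cof0 C"
    have "\<exists>d\<in>g ` C. leY q d" if q: "q \<in> T" for q
    proof (rule ccontr)
      assume "\<not> (\<exists>d\<in>g ` C. leY q d)"
      then have "\<forall>c\<in>C. le0 c (f q)" using dich q c unfolding cof0_def by blast
      moreover obtain y where y: "y \<in> T" "\<not> le0 y (f q)" using nomax0 fT q by blast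
      moreover obtain c where "c \<in> C" "le0 y c" using c y(1) unfolding cof0_def by blast
      ultimately show False using trans0 by blast
    qed
    then show ?thesis using c gT unfolding cof0_def cofY_def by blast
  qed
  have fcof: "cofY C \<Longrightarrow> cof0 (f ` C)" for C
  proof -
    assume c: "cofY C"
    have "\<exists>d\<in>f ` C. le0 q d" if q: "q \<in> T" for q
    proof (rule ccontr)
      assume "\<not> (\<exists>d\<in>f ` C. le0 q d)"
      then have "\<forall>c\<in>C. leY c (g q)" using dich q c unfolding cofY_def by blast
      moreover obtain y where y: "y \<in> T" "\<not> leY y (g q)" using nomaxY gT q by blast
      moreover obtain c where "c \<in> C" "leY y c" using c y(1) unfolding cofY_def by blast
      ultimately show False using transY by blast
    qed
    then show ?thesis using c fT unfolding cof0_def cofY_def by blast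
  qed
  have "cofB T" unfolding cofB_def using refl0 reflY by blast
  then obtain M where M: "cofB M" "\<And>C. cofB C \<Longrightarrow> M \<lesssim> C"
    using exists_min_lepoll[of cofB T] by metis
  define u2 where "u2 a b = (SOME u. u \<in> T \<and> le0 a u \<and> leY a u \<and> le0 b u \<and> leY b u)" for a b
  have u2: "u2 a b \<in> T \<and> le0 a (u2 a b) \<and> leY a (u2 a b) \<and> le0 b (u2 a b) \<and> leY b (u2 a b)"
    if "a \<in> T" "b \<in> T" for a b
  proof -
    have "\<exists>u. u \<in> T \<and> le0 a u \<and> leY a u \<and> le0 b u \<and> leY b u" using dir that by blast
    then show ?thesis unfolding u2_def by (rule someI_ex)
  qed
  have M0: "cof0 C \<Longrightarrow> M \<lesssim> C" for C
  proof -
    assume c: "cof0 C"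
    have cT: "C \<subseteq> T" and c2: "\<forall>x\<in>T. \<exists>c\<in>C. le0 x c" using c unfolding cof0_def by auto
    let ?D = "g ` C"
    have d: "cofY ?D" using gcof[OF c] .
    have dT: "?D \<subseteq> T" and d2: "\<forall>x\<in>T. \<exists>c\<in>?D. leY x c" using d unfolding cofY_def by auto
    let ?W = "(\<lambda>(a, b). u2 a b) ` (C \<times> ?D)"
    have "cofB ?W"
    proof -
      have "?W \<subseteq> T"
      proof
        fix w assume "w \<in> ?W"
        then obtain a b where "a \<in> C" "b \<in> ?D" "w = u2 a b" by auto
        then show "w \<in> T" using u2 cT dT by blast
      qed
      moreover have "\<exists>w\<in>?W. le0 x w \<and> leY x w" if x: "x \<in> T" for x
      proof -
        obtain a where a: "a \<in> C" "le0 x a" using c2 x by blast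
        obtain b where b: "b \<in> ?D" "leY x b" using d2 x by blast
        have ab: "a \<in> T" "b \<in> T" using a(1) b(1) cT dT by auto
        have "le0 a (u2 a b)" "leY b (u2 a b)" using u2[OF ab] by auto
        then have "le0 x (u2 a b) \<and> leY x (u2 a b)" using a(2) b(2) trans0 transY by blast
        moreover have "u2 a b \<in> ?W" using a b by blast
        ultimately show ?thesis by blast
      qed
      ultimately show ?thesis unfolding cofB_def by blast
    qed
    then have 1: "M \<lesssim> ?W" using M(2) by blast
    have 2: "?W \<lesssim> C \<times> ?D" by (rule image_lepoll)
    have 3: "C \<times> ?D \<lesssim> C \<times> C" by (rule times_lepoll_mono[OF lepoll_refl image_lepoll])
    have 4: "C \<times> C \<lesssim> C" using infinite_times_lepoll inf0[OF c] by blast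
    show ?thesis using lepoll_trans[OF 1 lepoll_trans[OF 2 lepoll_trans[OF 3 4]]] .
  qed
  have MY: "cofY C \<Longrightarrow> M \<lesssim> C" for C
  proof -
    assume c: "cofY C"
    have "M \<lesssim> f ` C" using M0 fcof[OF c] by blast
    then show ?thesis using lepoll_trans[OF _ image_lepoll[of f C]] by blast
  qed
  have small: "S \<subseteq> T \<Longrightarrow> \<not> M \<lesssim> S \<Longrightarrow> \<exists>u\<in>T. \<forall>s\<in>S. le0 s u \<and> leY s u" for S
  proof -
    assume S: "S \<subseteq> T" "\<not> M \<lesssim> S"
    have "\<not> M \<lesssim> g ` S" using S(2) lepoll_trans[OF _ image_lepoll[of g S]] by blast
    then have "\<not> cofY (g ` S)" using MY by blast
    then obtain q where q: "q \<in> T" "\<forall>s\<in>S. \<not> leY q (g s)" using S gT unfolding cofY_def by blast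
    then have q2: "\<forall>s\<in>S. le0 s (f q)" using dich S(1) by blast
    have "\<not> M \<lesssim> f ` S" using S(2) lepoll_trans[OF _ image_lepoll[of f S]] by blast
    then have "\<not> cof0 (f ` S)" using M0 by blast
    then obtain p where p: "p \<in> T" "\<forall>s\<in>S. \<not> le0 p (f s)" using S fT unfolding cof0_def by blast
    then have p2: "\<forall>s\<in>S. leY s (g p)" using dich S(1) by blast
    have "f q \<in> T" "g p \<in> T" using fT gT p q by blast+
    then obtain u where u: "u \<in> T" "le0 (f q) u" "leY (g p) u" using dir by blast
    show ?thesis using u q2 p2 trans0 transY by blast
  qed
  have "cof0 M" using M(1) unfolding cof0_def cofB_def by blast
  then have Minf: "infinite M" by (rule inf0)
  define R where "R = card_of M - Id"
  have wfR: "wf R" unfolding R_def by (rule M_wf)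
  have Riff: "(b, a) \<in> R \<longleftrightarrow> b \<in> underS (card_of M) a" for a b unfolding R_def by (rule M_underS)
  define H where "H \<phi> a = (SOME u. u \<in> T \<and> le0 a u \<and> leY a u \<and> (\<forall>b. (b, a) \<in> R \<longrightarrow> le0 (\<phi> b) u \<and> leY (\<phi> b) u))"
    for \<phi> :: "'b \<Rightarrow> 'b" and a
  define c where "c = wfrec R H"
  have ceq: "c a = H (cut c R a) a" for a unfolding c_def by (rule wfrec[OF wfR])
  have key: "a \<in> M \<longrightarrow> c a \<in> T \<and> le0 a (c a) \<and> leY a (c a) \<and> (\<forall>b. (b, a) \<in> R \<longrightarrow> le0 (c b) (c a) \<and> leY (c b) (c a))" for a
  proof (induction a rule: wf_induct_rule[OF wfR])
    case (1 a)
    show ?case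
    proof
      assume aM: "a \<in> M"
      have bT: "(b, a) \<in> R \<Longrightarrow> c b \<in> T" for b
      proof -
        assume ba: "(b, a) \<in> R"
        then have "b \<in> M" using M_underS_in[of b M a] Riff[of b a] by blast
        then show ?thesis using 1 ba by blast
      qed
      let ?S = "insert a (c ` underS (card_of M) a)"
      have "a \<in> T" using aM M(1) unfolding cofB_def by blast
      then have ST: "?S \<subseteq> T" using bT Riff by auto
      have "\<not> M \<lesssim> ?S"
      proof
        assume "M \<lesssim> ?S"
        also have "?S \<lesssim> insert a (underS (card_of M) a)"
        proof -
          have na: "a \<notin> underS (card_of M) a" by (simp add: underS_def)
          have "?S \<subseteq> (\<lambda>x. if x = a then a else c x) ` insert a (underS (card_of M) a)"
          proof
            fix z assume "z \<in> ?S"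
            then consider "z = a" | b where "b \<in> underS (card_of M) a" "z = c b" by blast
            then show "z \<in> (\<lambda>x. if x = a then a else c x) ` insert a (underS (card_of M) a)"
            proof cases
              case 1 then show ?thesis by (intro image_eqI[of _ _ a]) auto
            next
              case 2
              then have "b \<noteq> a" using na by blast
              then show ?thesis using 2 by (intro image_eqI[of _ _ b]) auto
            qed
          qed
          then show ?thesis by (rule subset_image_lepoll)
        qed
        finally show False using underS_small[OF Minf aM] by blast
      qed
      then obtain u where u: "u \<in> T" "\<forall>s\<in>?S. le0 s u \<and> leY s u" using small[OF ST] by blast
      have ex: "\<exists>u. u \<in> T \<and> le0 a u \<and> leY a u \<and> (\<forall>b. (b, a) \<in> R \<longrightarrow> le0 (cut c R a b) u \<and> leY (cut c R a b) u)"
      proof (intro exI conjI allI impI)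
        show "u \<in> T" "le0 a u" "leY a u" using u by auto
        fix b assume ba: "(b, a) \<in> R"
        then have "c b \<in> ?S" using Riff by auto
        moreover have "cut c R a b = c b" using ba by (rule cut_apply)
        ultimately show "le0 (cut c R a b) u" "leY (cut c R a b) u" using u by auto
      qed
      have "c a = H (cut c R a) a" by (rule ceq)
      then have "c a \<in> T \<and> le0 a (c a) \<and> leY a (c a) \<and> (\<forall>b. (b, a) \<in> R \<longrightarrow> le0 (cut c R a b) (c a) \<and> leY (cut c R a b) (c a))"
        unfolding H_def using someI_ex[OF ex] by simp
      then show "c a \<in> T \<and> le0 a (c a) \<and> leY a (c a) \<and> (\<forall>b. (b, a) \<in> R \<longrightarrow> le0 (c b) (c a) \<and> leY (c b) (c a))"
        using cut_apply[of _ a R c] by simp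
    qed
  qed
  let ?C = "c ` M"
  have "?C \<subseteq> T" using key by blast
  moreover have "\<forall>x\<in>?C. \<forall>y\<in>?C. (le0 x y \<and> leY x y) \<or> (le0 y x \<and> leY y x)"
  proof (intro ballI)
    fix x y assume "x \<in> ?C" "y \<in> ?C"
    then obtain a b where ab: "a \<in> M" "b \<in> M" "x = c a" "y = c b" by blast
    from M_total[OF ab(1,2)] show "(le0 x y \<and> leY x y) \<or> (le0 y x \<and> leY y x)"
    proof (elim disjE)
      assume "a = b" then show ?thesis using ab key refl0 reflY by blast
    next
      assume "a \<in> underS (card_of M) b" then have "(a, b) \<in> R" using Riff by blast
      then show ?thesis using ab key by blast
    next
      assume "b \<in> underS (card_of M) a" then have "(b, a) \<in> R" using Riff by blast
      then show ?thesis using ab key by blast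
    qed
  qed
  moreover have "\<forall>x\<in>T. \<exists>d\<in>?C. le0 x d \<and> leY x d"
  proof
    fix x assume "x \<in> T"
    then obtain m where m: "m \<in> M" "le0 x m" "leY x m" using M(1) unfolding cofB_def by blast
    then show "\<exists>d\<in>?C. le0 x d \<and> leY x d" using key trans0 transY by blast
  qed
  ultimately show ?thesis by blast
qed



lemma part_a:
  fixes n :: nat and Xs :: "nat \<Rightarrow> 'a set" and Ents :: "nat \<Rightarrow> ('a \<times> 'a) set set"
  assumes n2: "n \<ge> 2" and b: "\<forall>i<n. ballean (Xs i) (Ents i)" and ub: "\<forall>i<n. unbounded (Xs i) (Ents i)"
    and ne: "\<forall>i<n. Xs i \<noteq> {}"
    and norm: "normal_ballean (prod_carrier n Xs) (prod_ents n Xs Ents)"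
  shows "has_linear_base (bornology (prod_carrier n Xs) (prod_ents n Xs Ents))"
proof -
  define X where "X = prod_carrier n Xs"
  define Ent where "Ent = prod_ents n Xs Ents"
  have bX: "ballean X Ent" unfolding X_def Ent_def using prod_ballean b by blast
  have "X \<noteq> {}" unfolding X_def prod_carrier_def using ne by (simp add: PiE_eq_empty_iff)
  then obtain p where pX: "p \<in> X" by blast
  have pi: "p i \<in> Xs i" if "i < n" for i using pX that unfolding X_def prod_carrier_def by auto
  define T where "T = {Es. \<forall>i<n. Es i \<in> Ents i}"
  have TE: "t \<in> T \<Longrightarrow> prod_ent n Xs t \<in> Ent" for t unfolding T_def Ent_def prod_ents_def by blast
  have ET: "E \<in> Ent \<Longrightarrow> \<exists>t\<in>T. E = prod_ent n Xs t" for E unfolding T_def Ent_def prod_ents_def by blast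
  have tsub: "t \<in> T \<Longrightarrow> i < n \<Longrightarrow> t i \<subseteq> Xs i \<times> Xs i" for t i
    unfolding T_def using b bl_sub by blast
  define ball where "ball t = prod_ent n Xs t `` {p}" for t
  have ballEq: "ball t = PiE {..<n} (\<lambda>i. t i `` {p i})" if t: "t \<in> T" for t
  proof -
    have "\<And>i. i < n \<Longrightarrow> t i \<subseteq> Xs i \<times> Xs i" using tsub[OF t] .
    then show ?thesis unfolding ball_def using prod_ent_img[of p n Xs t] pX unfolding X_def by blast
  qed
  define le0 where "le0 s t \<longleftrightarrow> s 0 `` {p 0} \<subseteq> t 0 `` {p 0}" for s t :: "nat \<Rightarrow> ('a \<times> 'a) set"
  define leY where "leY s t \<longleftrightarrow> (\<forall>i. 0 < i \<and> i < n \<longrightarrow> s i `` {p i} \<subseteq> t i `` {p i})"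
    for s t :: "nat \<Rightarrow> ('a \<times> 'a) set"
  have mono: "s \<in> T \<Longrightarrow> t \<in> T \<Longrightarrow> le0 s t \<Longrightarrow> leY s t \<Longrightarrow> ball s \<subseteq> ball t" for s t
  proof -
    assume st: "s \<in> T" "t \<in> T" and l: "le0 s t" "leY s t"
    have "\<And>i. i \<in> {..<n} \<Longrightarrow> s i `` {p i} \<subseteq> t i `` {p i}"
    proof -
      fix i assume "i \<in> {..<n}"
      show "s i `` {p i} \<subseteq> t i `` {p i}"
      proof (cases "i = 0")
        case True then show ?thesis using l(1) unfolding le0_def by simp
      next
        case False then show ?thesis using l(2) \<open>i \<in> {..<n}\<close> unfolding leY_def by simp
      qed
    qed
    then have "PiE {..<n} (\<lambda>i. s i `` {p i}) \<subseteq> PiE {..<n} (\<lambda>i. t i `` {p i})" by (rule PiE_mono)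
    then show ?thesis using ballEq[OF st(1)] ballEq[OF st(2)] by simp
  qed
  define Aset where "Aset = {x\<in>X. \<forall>i. 0 < i \<and> i < n \<longrightarrow> x i = p i}"
  define Cset where "Cset = {x\<in>X. x 0 = p 0}"
  have AX: "Aset \<subseteq> X" and CX: "Cset \<subseteq> X" unfolding Aset_def Cset_def by auto
  have ad: "asymp_disjoint X Ent Aset Cset"
    unfolding asymp_disjoint_def
  proof
    fix E assume E: "E \<in> Ent"
    then obtain t where t: "t \<in> T" "E = prod_ent n Xs t" using ET by blast
    have "E `` Aset \<inter> E `` Cset \<subseteq> E `` {p}"
    proof
      fix y assume y: "y \<in> E `` Aset \<inter> E `` Cset"
      then obtain x x' where x: "x \<in> Aset" "(x, y) \<in> E" and x': "x' \<in> Cset" "(x', y) \<in> E" by blast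
      have yX: "y \<in> X" using x(2) t(2) prod_ent_sub unfolding X_def by blast
      have "(p i, y i) \<in> t i" if i: "i < n" for i
      proof (cases "i = 0")
        case True
        then have "x' i = p i" using x'(1) unfolding Cset_def by simp
        moreover have "(x' i, y i) \<in> t i" using x'(2) t(2) i unfolding prod_ent_def by blast
        ultimately show ?thesis by simp
      next
        case False
        then have "x i = p i" using x(1) i unfolding Aset_def by simp
        moreover have "(x i, y i) \<in> t i" using x(2) t(2) i unfolding prod_ent_def by blast
        ultimately show ?thesis by simp
      qed
      then have "(p, y) \<in> E" using pX yX t(2) unfolding prod_ent_def X_def by blast
      then show "y \<in> E `` {p}" by blast
    qed
    moreover have "E `` {p} \<in> bornology X Ent" using bl_ball_bdd[OF bX E pX] .
    ultimately show "E `` Aset \<inter> E `` Cset \<in> bornology X Ent" using bl_sub_bdd by blast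
  qed
  obtain U V where UV: "U \<subseteq> X" "V \<subseteq> X" "asymp_nbhd X Ent U Aset" "asymp_nbhd X Ent V Cset" "U \<inter> V = {}"
    using norm[unfolded normal_ballean_def, folded X_def Ent_def, rule_format, OF AX CX ad] by blast
  have exf: "\<exists>K. K \<in> T \<and> prod_ent n Xs E `` Aset - U \<subseteq> ball K" if E: "E \<in> T" for E
  proof -
    have "prod_ent n Xs E `` Aset - U \<in> bornology X Ent" using UV(3) TE[OF E] unfolding asymp_nbhd_def by blast
    then obtain K where K: "K \<in> Ent" "prod_ent n Xs E `` Aset - U \<subseteq> K `` {p}" using bl_bdd_at[OF bX _ pX] by blast
    then obtain k where "k \<in> T" "K = prod_ent n Xs k" using ET by blast
    then show ?thesis using K unfolding ball_def by blast
  qed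
  have exg: "\<exists>K. K \<in> T \<and> prod_ent n Xs E `` Cset - V \<subseteq> ball K" if E: "E \<in> T" for E
  proof -
    have "prod_ent n Xs E `` Cset - V \<in> bornology X Ent" using UV(4) TE[OF E] unfolding asymp_nbhd_def by blast
    then obtain K where K: "K \<in> Ent" "prod_ent n Xs E `` Cset - V \<subseteq> K `` {p}" using bl_bdd_at[OF bX _ pX] by blast
    then obtain k where "k \<in> T" "K = prod_ent n Xs k" using ET by blast
    then show ?thesis using K unfolding ball_def by blast
  qed
  define f where "f E = (SOME K. K \<in> T \<and> prod_ent n Xs E `` Aset - U \<subseteq> ball K)" for E
  define g where "g E = (SOME K. K \<in> T \<and> prod_ent n Xs E `` Cset - V \<subseteq> ball K)" for E
  have f: "E \<in> T \<Longrightarrow> f E \<in> T \<and> prod_ent n Xs E `` Aset - U \<subseteq> ball (f E)" for E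
    unfolding f_def using exf by (rule someI_ex)
  have g: "E \<in> T \<Longrightarrow> g E \<in> T \<and> prod_ent n Xs E `` Cset - V \<subseteq> ball (g E)" for E
    unfolding g_def using exg by (rule someI_ex)
  have dich: "\<forall>E\<in>T. \<forall>F\<in>T. le0 F (f E) \<or> leY E (g F)"
  proof (intro ballI)
    fix E F assume E: "E \<in> T" and F: "F \<in> T"
    show "le0 F (f E) \<or> leY E (g F)"
    proof (rule ccontr)
      assume "\<not> (le0 F (f E) \<or> leY E (g F))"
      then have n0: "\<not> le0 F (f E)" and nY: "\<not> leY E (g F)" by auto
      from n0 obtain y0 where y0: "(p 0, y0) \<in> F 0" "(p 0, y0) \<notin> f E 0" unfolding le0_def by blast
      from nY obtain j yj where j: "0 < j" "j < n" "(p j, yj) \<in> E j" "(p j, yj) \<notin> g F j"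
        unfolding leY_def by blast
      have n0': "0 < n" using j by simp
      have y0X: "y0 \<in> Xs 0" using tsub[OF F n0'] y0(1) by blast
      have yjX: "yj \<in> Xs j" using tsub[OF E j(2)] j(3) by blast
      have fET: "f E \<in> T" using f[OF E] by blast
      have gFT: "g F \<in> T" using g[OF F] by blast
      define y where "y = p(0 := y0, j := yj)"
      have pE: "p \<in> PiE {..<n} Xs" using pX unfolding X_def prod_carrier_def .
      have yX: "y \<in> X" using pE y0X yjX n0' j unfolding y_def X_def prod_carrier_def by (auto simp: PiE_def Pi_def extensional_def)
      have y0j: "y 0 = y0" "y j = yj" using j unfolding y_def by auto
      have yo: "i \<noteq> 0 \<Longrightarrow> i \<noteq> j \<Longrightarrow> y i = p i" for i unfolding y_def by auto
      define x where "x = p(0 := y0)"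
      have xX: "x \<in> X" using pE y0X n0' unfolding x_def X_def prod_carrier_def by (auto simp: PiE_def Pi_def extensional_def)
      have xA: "x \<in> Aset" using xX unfolding Aset_def x_def by auto
      have "(x i, y i) \<in> E i" if i: "i < n" for i
      proof -
        consider "i = 0" | "i = j" | "i \<noteq> 0" "i \<noteq> j" by blast
        then show ?thesis
        proof cases
          case 1 then show ?thesis using bl_id[of "Xs 0" "Ents 0" "E 0" y0] b E n0' y0X y0j
            unfolding x_def T_def by simp
        next
          case 2 then show ?thesis using j y0j unfolding x_def by simp
        next
          case 3 then show ?thesis using bl_id[of "Xs i" "Ents i" "E i" "p i"] b E i pi[OF i] yo[OF 3]
            unfolding x_def T_def by simp
        qed
      qed
      then have "(x, y) \<in> prod_ent n Xs E" using xX yX unfolding prod_ent_def X_def by blast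
      then have yEA: "y \<in> prod_ent n Xs E `` Aset" using xA by blast
      have "y \<notin> ball (f E)"
      proof
        assume "y \<in> ball (f E)"
        then have "(p 0, y 0) \<in> f E 0" unfolding ball_def prod_ent_def using n0' by blast
        then show False using y0 y0j by simp
      qed
      then have yU: "y \<in> U" using f[OF E] yEA by blast
      define x' where "x' = p(j := yj)"
      have x'X: "x' \<in> X" using pE yjX j unfolding x'_def X_def prod_carrier_def by (auto simp: PiE_def Pi_def extensional_def)
      have x'C: "x' \<in> Cset" using x'X j unfolding Cset_def x'_def by auto
      have "(x' i, y i) \<in> F i" if i: "i < n" for i
      proof -
        consider "i = 0" | "i = j" | "i \<noteq> 0" "i \<noteq> j" by blast
        then show ?thesis
        proof cases
          case 1 then show ?thesis using j y0 y0j unfolding x'_def by simp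
        next
          case 2 then show ?thesis using bl_id[of "Xs j" "Ents j" "F j" yj] b F j yjX y0j
            unfolding x'_def T_def by simp
        next
          case 3 then show ?thesis using bl_id[of "Xs i" "Ents i" "F i" "p i"] b F i pi[OF i] yo[OF 3]
            unfolding x'_def T_def by simp
        qed
      qed
      then have "(x', y) \<in> prod_ent n Xs F" using x'X yX unfolding prod_ent_def X_def by blast
      then have yFC: "y \<in> prod_ent n Xs F `` Cset" using x'C by blast
      have "y \<notin> ball (g F)"
      proof
        assume "y \<in> ball (g F)"
        then have "(p j, y j) \<in> g F j" unfolding ball_def prod_ent_def using j by blast
        then show False using j y0j by simp
      qed
      then have yV: "y \<in> V" using g[OF F] yFC by blast
      show False using yU yV UV(5) by blast
    qed
  qed
  have nomax: "\<exists>y\<in>T. \<not> x i `` {p i} \<supseteq> y i `` {p i}" if x: "x \<in> T" and i: "i < n" for x i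
  proof -
    have "\<not> Xs i \<subseteq> x i `` {p i}"
    proof
      assume "Xs i \<subseteq> x i `` {p i}"
      then have "Xs i \<in> bornology (Xs i) (Ents i)" unfolding bornology_def using x i pi[OF i] unfolding T_def by blast
      then show False using ub i unfolding unbounded_def by blast
    qed
    then obtain z where z: "z \<in> Xs i" "z \<notin> x i `` {p i}" by blast
    obtain F where F: "F \<in> Ents i" "(p i, z) \<in> F" using bl_pair[of "Xs i" "Ents i" "p i" z] b i pi[OF i] z(1) by blast
    have "x(i := F) \<in> T" using x F unfolding T_def by auto
    moreover have "\<not> x i `` {p i} \<supseteq> (x(i := F)) i `` {p i}" using z F by auto
    ultimately show ?thesis by blast
  qed
  have nomax0: "\<forall>x\<in>T. \<exists>y\<in>T. \<not> le0 y x"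
  proof
    fix x assume "x \<in> T"
    then obtain y where "y \<in> T" "\<not> x 0 `` {p 0} \<supseteq> y 0 `` {p 0}" using nomax[of x 0] n2 by auto
    then show "\<exists>y\<in>T. \<not> le0 y x" unfolding le0_def by blast
  qed
  have nomaxY: "\<forall>x\<in>T. \<exists>y\<in>T. \<not> leY y x"
  proof
    fix x assume "x \<in> T"
    then obtain y where "y \<in> T" "\<not> x 1 `` {p 1} \<supseteq> y 1 `` {p 1}" using nomax[of x 1] n2 by auto
    moreover have "0 < (1::nat)" "1 < n" using n2 by auto
    ultimately show "\<exists>y\<in>T. \<not> leY y x" unfolding leY_def by blast
  qed
  have dir: "\<forall>x\<in>T. \<forall>y\<in>T. \<exists>u\<in>T. le0 x u \<and> leY x u \<and> le0 y u \<and> leY y u"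
  proof (intro ballI)
    fix x y assume x: "x \<in> T" and y: "y \<in> T"
    have "\<forall>i. \<exists>D. i < n \<longrightarrow> D \<in> Ents i \<and> x i \<union> y i \<subseteq> D"
    proof
      fix i show "\<exists>D. i < n \<longrightarrow> D \<in> Ents i \<and> x i \<union> y i \<subseteq> D"
      proof (cases "i < n")
        case True
        then have "x i \<in> Ents i" "y i \<in> Ents i" "ballean (Xs i) (Ents i)" using x y b unfolding T_def by auto
        then show ?thesis using bl_un by blast
      qed simp
    qed
    then obtain u where u: "\<And>i. i < n \<Longrightarrow> u i \<in> Ents i \<and> x i \<union> y i \<subseteq> u i" by metis
    have "u \<in> T" using u unfolding T_def by blast
    moreover have "le0 x u \<and> leY x u \<and> le0 y u \<and> leY y u"
    proof -
      have "0 < n" using n2 by simp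
      then have "x 0 \<subseteq> u 0" "y 0 \<subseteq> u 0" using u by auto
      moreover have "\<forall>i. 0 < i \<and> i < n \<longrightarrow> x i \<subseteq> u i \<and> y i \<subseteq> u i" using u by auto
      ultimately show ?thesis unfolding le0_def leY_def by blast
    qed
    ultimately show "\<exists>u\<in>T. le0 x u \<and> leY x u \<and> le0 y u \<and> leY y u" by blast
  qed
  have "T \<noteq> {}"
  proof -
    have "\<forall>i. \<exists>D. i < n \<longrightarrow> D \<in> Ents i" using b bl_pair pi by meson
    then obtain u where "\<And>i. i < n \<Longrightarrow> u i \<in> Ents i" by metis
    then show ?thesis unfolding T_def by blast
  qed
  moreover have "\<forall>x\<in>T. le0 x x" "\<forall>x\<in>T. leY x x" unfolding le0_def leY_def by auto
  moreover have "\<forall>x y z. le0 x y \<longrightarrow> le0 y z \<longrightarrow> le0 x z" unfolding le0_def by auto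
  moreover have "\<forall>x y z. leY x y \<longrightarrow> leY y z \<longrightarrow> leY x z" unfolding leY_def by blast
  moreover have "\<forall>x\<in>T. f x \<in> T" "\<forall>x\<in>T. g x \<in> T" using f g by blast+
  ultimately obtain C where C: "C \<subseteq> T" "\<forall>x\<in>C. \<forall>y\<in>C. (le0 x y \<and> leY x y) \<or> (le0 y x \<and> leY y x)"
    "\<forall>x\<in>T. \<exists>c\<in>C. le0 x c \<and> leY x c"
    using abstract_chain[of T le0 leY f g] dir nomax0 nomaxY dich by blast
  let ?L = "ball ` C"
  have "?L \<subseteq> bornology X Ent"
    using C(1) TE bl_ball_bdd[OF bX _ pX] unfolding ball_def by blast
  moreover have "\<forall>a\<in>?L. \<forall>b\<in>?L. a \<subseteq> b \<or> b \<subseteq> a"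
  proof (intro ballI)
    fix a b assume "a \<in> ?L" "b \<in> ?L"
    then obtain s t where st: "s \<in> C" "t \<in> C" "a = ball s" "b = ball t" by blast
    then show "a \<subseteq> b \<or> b \<subseteq> a" using C(1,2) mono by blast
  qed
  moreover have "\<forall>B\<in>bornology X Ent. \<exists>l\<in>?L. B \<subseteq> l"
  proof
    fix B assume "B \<in> bornology X Ent"
    then obtain E where E: "E \<in> Ent" "B \<subseteq> E `` {p}" using bl_bdd_at[OF bX _ pX] by blast
    then obtain t where t: "t \<in> T" "E = prod_ent n Xs t" using ET by blast
    then obtain c where c: "c \<in> C" "le0 t c" "leY t c" using C(3) by blast
    then have "ball t \<subseteq> ball c" using mono t C(1) by blast
    then show "\<exists>l\<in>?L. B \<subseteq> l" using E t c unfolding ball_def by blast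
  qed
  ultimately show ?thesis unfolding has_linear_base_def X_def Ent_def by blast
qed



lemma normal_from_chain:
  fixes X :: "'a set" and Ent :: "('a \<times> 'a) set set" and e :: "'a set \<Rightarrow> ('a \<times> 'a) set"
  assumes b: "ballean X Ent"
    and L1: "L \<subseteq> bornology X Ent" and L2: "\<forall>a\<in>L. \<forall>b\<in>L. a \<subseteq> b \<or> b \<subseteq> a"
    and L3: "\<forall>B\<in>bornology X Ent. \<exists>l\<in>L. B \<subseteq> l"
    and M1: "M \<subseteq> L" and M3: "\<And>C. C \<subseteq> L \<Longrightarrow> (\<forall>l\<in>L. \<exists>c\<in>C. l \<subseteq> c) \<Longrightarrow> M \<lesssim> C"
    and Minf: "infinite M"
    and e1: "\<forall>m\<in>M. e m \<in> Ent" and e2: "\<forall>E\<in>Ent. \<exists>m\<in>M. E \<subseteq> e m"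
  shows "normal_ballean X Ent"
proof -
  have small: "\<exists>l\<in>L. \<forall>s\<in>S. s \<subseteq> l" if S: "S \<subseteq> L" "\<not> M \<lesssim> S" for S
  proof (rule ccontr)
    assume "\<not> (\<exists>l\<in>L. \<forall>s\<in>S. s \<subseteq> l)"
    then have h: "\<forall>l\<in>L. \<exists>s\<in>S. \<not> s \<subseteq> l" by simp
    have "\<forall>l\<in>L. \<exists>s\<in>S. l \<subseteq> s"
    proof
      fix l assume l: "l \<in> L"
      then obtain s where s: "s \<in> S" "\<not> s \<subseteq> l" using h by metis
      then have "s \<in> L" using S(1) by blast
      then have "l \<subseteq> s \<or> s \<subseteq> l" using L2 l by simp
      then show "\<exists>s\<in>S. l \<subseteq> s" using s by metis
    qed
    then have "M \<lesssim> S" by (rule M3[OF S(1)])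
    then show False using S(2) by simp
  qed
  show ?thesis unfolding normal_ballean_def
  proof (intro allI impI)
    fix A C assume AX: "A \<subseteq> X" and CX: "C \<subseteq> X" and ad: "asymp_disjoint X Ent A C"
    have "\<forall>\<alpha> \<beta>. \<exists>D. \<alpha> \<in> M \<and> \<beta> \<in> M \<longrightarrow> D \<in> Ent \<and> e \<alpha> O (e \<beta>)\<inverse> \<subseteq> D"
      using bl_comp[OF b] e1 by meson
    then obtain D where D: "\<And>\<alpha> \<beta>. \<alpha> \<in> M \<Longrightarrow> \<beta> \<in> M \<Longrightarrow> D \<alpha> \<beta> \<in> Ent \<and> e \<alpha> O (e \<beta>)\<inverse> \<subseteq> D \<alpha> \<beta>"
      by metis
    have "\<forall>\<alpha> \<beta>. \<exists>l. \<alpha> \<in> M \<and> \<beta> \<in> M \<longrightarrow> l \<in> L \<and> D \<alpha> \<beta> `` A \<inter> D \<alpha> \<beta> `` C \<subseteq> l"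
    proof (intro allI)
      fix \<alpha> \<beta>
      show "\<exists>l. \<alpha> \<in> M \<and> \<beta> \<in> M \<longrightarrow> l \<in> L \<and> D \<alpha> \<beta> `` A \<inter> D \<alpha> \<beta> `` C \<subseteq> l"
      proof (cases "\<alpha> \<in> M \<and> \<beta> \<in> M")
        case True
        then have "D \<alpha> \<beta> \<in> Ent" using D by blast
        then have "D \<alpha> \<beta> `` A \<inter> D \<alpha> \<beta> `` C \<in> bornology X Ent" using ad unfolding asymp_disjoint_def by blast
        then obtain l where "l \<in> L" "D \<alpha> \<beta> `` A \<inter> D \<alpha> \<beta> `` C \<subseteq> l"
          using L3 by blast
        then show ?thesis by blast
      next
        case False then show ?thesis by (intro exI[of _ undefined] impI) (erule notE, assumption)
      qed
    qed
    then obtain lf where lf: "\<And>\<alpha> \<beta>. \<alpha> \<in> M \<Longrightarrow> \<beta> \<in> M \<Longrightarrow> lf \<alpha> \<beta> \<in> L \<and> D \<alpha> \<beta> `` A \<inter> D \<alpha> \<beta> `` C \<subseteq> lf \<alpha> \<beta>"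
      by metis
    have "\<forall>\<beta>. \<exists>l. \<beta> \<in> M \<longrightarrow> l \<in> L \<and> (\<forall>\<alpha> \<in> insert \<beta> (underS (card_of M) \<beta>). lf \<alpha> \<beta> \<subseteq> l)"
    proof (intro allI impI)
      fix \<beta> show "\<exists>l. \<beta> \<in> M \<longrightarrow> l \<in> L \<and> (\<forall>\<alpha> \<in> insert \<beta> (underS (card_of M) \<beta>). lf \<alpha> \<beta> \<subseteq> l)"
      proof (cases "\<beta> \<in> M")
        case True
        let ?I = "insert \<beta> (underS (card_of M) \<beta>)"
        have IM: "?I \<subseteq> M" using True by (auto dest: M_underS_in)
        let ?S = "(\<lambda>\<alpha>. lf \<alpha> \<beta>) ` ?I"
        have SL: "?S \<subseteq> L"
        proof
          fix s assume "s \<in> ?S"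
          then obtain \<alpha> where a: "\<alpha> \<in> ?I" "s = lf \<alpha> \<beta>" by blast
          then have "\<alpha> \<in> M" using IM by blast
          then show "s \<in> L" using lf[of \<alpha> \<beta>] True a(2) by blast
        qed
        have "\<not> M \<lesssim> ?S"
        proof
          assume "M \<lesssim> ?S"
          then have "M \<lesssim> ?I" using lepoll_trans[OF _ image_lepoll] by blast
          then show False using underS_small[OF Minf True] by blast
        qed
        then obtain l where "l \<in> L" "\<forall>s\<in>?S. s \<subseteq> l" using small[OF SL] by blast
        then show ?thesis by blast
      next
        case False then show ?thesis by (intro exI[of _ undefined] impI) (erule notE, assumption)
      qed
    qed
    then obtain \<psi> where psi: "\<And>\<beta>. \<beta> \<in> M \<Longrightarrow> \<psi> \<beta> \<in> L \<and> (\<forall>\<alpha> \<in> insert \<beta> (underS (card_of M) \<beta>). lf \<alpha> \<beta> \<subseteq> \<psi> \<beta>)"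
      by metis
    define U where "U = (\<Union>\<alpha>\<in>M. e \<alpha> `` (A - \<psi> \<alpha>))"
    define V where "V = (\<Union>\<alpha>\<in>M. e \<alpha> `` (C - \<psi> \<alpha>))"
    have UX: "U \<subseteq> X" unfolding U_def using e1 bl_sub[OF b] by blast
    have VX: "V \<subseteq> X" unfolding V_def using e1 bl_sub[OF b] by blast
    have nb: "asymp_nbhd X Ent (\<Union>\<alpha>\<in>M. e \<alpha> `` (Z - \<psi> \<alpha>)) Z" for Z
      unfolding asymp_nbhd_def
    proof
      fix E assume E: "E \<in> Ent"
      then obtain \<alpha> where \<alpha>: "\<alpha> \<in> M" "E \<subseteq> e \<alpha>" using e2 by blast
      have "E `` Z - (\<Union>\<alpha>\<in>M. e \<alpha> `` (Z - \<psi> \<alpha>)) \<subseteq> e \<alpha> `` (\<psi> \<alpha>)"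
      proof
        fix y assume y: "y \<in> E `` Z - (\<Union>\<alpha>\<in>M. e \<alpha> `` (Z - \<psi> \<alpha>))"
        then obtain z where z: "z \<in> Z" "(z, y) \<in> E" by blast
        show "y \<in> e \<alpha> `` (\<psi> \<alpha>)"
        proof (cases "z \<in> \<psi> \<alpha>")
          case True then show ?thesis using z \<alpha> by blast
        next
          case False
          then have "y \<in> e \<alpha> `` (Z - \<psi> \<alpha>)" using z \<alpha> by blast
          then show ?thesis using y \<alpha>(1) by blast
        qed
      qed
      moreover have "e \<alpha> `` (\<psi> \<alpha>) \<in> bornology X Ent"
        using bl_img_bdd[OF b] psi[OF \<alpha>(1)] L1 e1 \<alpha>(1) by blast
      ultimately show "E `` Z - (\<Union>\<alpha>\<in>M. e \<alpha> `` (Z - \<psi> \<alpha>)) \<in> bornology X Ent" using bl_sub_bdd by blast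
    qed
    have disj: "U \<inter> V = {}"
    proof (rule ccontr)
      assume "U \<inter> V \<noteq> {}"
      then obtain y \<alpha> \<beta> a c where ab: "\<alpha> \<in> M" "\<beta> \<in> M" and a: "a \<in> A" "a \<notin> \<psi> \<alpha>" "(a, y) \<in> e \<alpha>"
        and c: "c \<in> C" "c \<notin> \<psi> \<beta>" "(c, y) \<in> e \<beta>"
        unfolding U_def V_def by blast
      have key: "False" if "\<gamma> \<in> M" "\<delta> \<in> M" "\<gamma> \<in> insert \<delta> (underS (card_of M) \<delta>)"
        "u \<in> A \<union> C" "v \<in> A \<union> C" "(u \<in> A \<and> v \<in> C) \<or> (u \<in> C \<and> v \<in> A)"
        "v \<notin> \<psi> \<delta>" "(u, y) \<in> e \<gamma>" "(v, y) \<in> e \<delta>" for \<gamma> \<delta> u v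
      proof -
        have "(u, v) \<in> D \<gamma> \<delta>" using D[OF that(1,2)] that(8,9) by blast
        moreover have "v \<in> X" using that(5) AX CX by blast
        then have "(v, v) \<in> D \<gamma> \<delta>" using bl_id[OF b] D[OF that(1,2)] by blast
        ultimately have "v \<in> D \<gamma> \<delta> `` A \<inter> D \<gamma> \<delta> `` C" using that(6) by blast
        then have "v \<in> lf \<gamma> \<delta>" using lf[OF that(1,2)] by blast
        then have "v \<in> \<psi> \<delta>" using psi[OF that(2)] that(3) by blast
        then show False using that(7) by blast
      qed
      from M_total[OF ab]
      show False
      proof (elim disjE)
        assume "\<alpha> = \<beta>" then show False using key[of \<alpha> \<beta> a c] ab a c by blast
      next
        assume "\<alpha> \<in> underS (card_of M) \<beta>" then show False using key[of \<alpha> \<beta> a c] ab a c by blast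
      next
        assume "\<beta> \<in> underS (card_of M) \<alpha>" then show False using key[of \<beta> \<alpha> c a] ab a c by blast
      qed
    qed
    show "\<exists>U V. U \<subseteq> X \<and> V \<subseteq> X \<and> asymp_nbhd X Ent U A \<and> asymp_nbhd X Ent V C \<and> U \<inter> V = {}"
      using UX VX nb[of A] nb[of C] disj unfolding U_def V_def by blast
  qed
qed



lemma finite_chain_Union:
  "finite M \<Longrightarrow> M \<noteq> {} \<Longrightarrow> \<forall>a\<in>M. \<forall>b\<in>M. a \<subseteq> b \<or> b \<subseteq> a \<Longrightarrow> \<Union>M \<in> M"
proof (induction M rule: finite_ne_induct)
  case (singleton x) then show ?case by simp
next
  case (insert x F)
  have cF: "\<forall>a\<in>F. \<forall>b\<in>F. a \<subseteq> b \<or> b \<subseteq> a" using insert.prems by simp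
  have u: "\<Union>F \<in> F" by (rule insert.IH[OF cF])
  have mem: "x \<in> insert x F" "\<Union>F \<in> insert x F" using u by auto
  have "x \<subseteq> \<Union>F \<or> \<Union>F \<subseteq> x" using insert.prems mem by blast
  then show ?case
  proof
    assume "x \<subseteq> \<Union>F" then have "\<Union>(insert x F) = \<Union>F" by blast
    then show ?thesis using u by simp
  next
    assume "\<Union>F \<subseteq> x" then have "\<Union>(insert x F) = x" by blast
    then show ?thesis by simp
  qed
qed

lemma surj_from_lepoll:
  assumes "A \<noteq> {}" "A \<lesssim> B" shows "\<exists>h. h ` B = A"
proof -
  from assms(2) have "(card_of A, card_of B) \<in> ordLeq" by (simp add: lepoll_card)
  then show ?thesis using card_of_ordLeq2[OF assms(1), of B] by blast
qed

lemma part_b: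
  fixes n :: nat and Xs :: "nat \<Rightarrow> 'a set" and Ents :: "nat \<Rightarrow> ('a \<times> 'a) set set"
  assumes n2: "n \<ge> 2" and b: "\<forall>i<n. ballean (Xs i) (Ents i)" and ub: "\<forall>i<n. unbounded (Xs i) (Ents i)"
    and ne: "\<forall>i<n. Xs i \<noteq> {}"
    and creg: "\<forall>i<n. cof_regular (Xs i) (Ents i)"
    and lin: "has_linear_base (bornology (prod_carrier n Xs) (prod_ents n Xs Ents))"
  shows "normal_ballean (prod_carrier n Xs) (prod_ents n Xs Ents)"
proof -
  define X where "X = prod_carrier n Xs"
  define Ent where "Ent = prod_ents n Xs Ents"
  have bX: "ballean X Ent" unfolding X_def Ent_def using prod_ballean b by blast
  have "X \<noteq> {}" unfolding X_def prod_carrier_def using ne by (simp add: PiE_eq_empty_iff)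
  then obtain p where pX: "p \<in> X" by blast
  have pi: "p i \<in> Xs i" if "i < n" for i using pX that unfolding X_def prod_carrier_def by auto
  have pE: "p \<in> PiE {..<n} Xs" using pX unfolding X_def prod_carrier_def .
  define T where "T = {Es. \<forall>i<n. Es i \<in> Ents i}"
  have TE: "t \<in> T \<Longrightarrow> prod_ent n Xs t \<in> Ent" for t unfolding T_def Ent_def prod_ents_def by blast
  have ET: "E \<in> Ent \<Longrightarrow> \<exists>t\<in>T. E = prod_ent n Xs t" for E unfolding T_def Ent_def prod_ents_def by blast
  have Ents_ne: "Ents i \<noteq> {}" if i: "i < n" for i
    using bl_pair[of "Xs i" "Ents i" "p i" "p i"] b i pi[OF i] by blast
  obtain t0 where t0: "t0 \<in> T"
  proof -
    have "\<forall>i. \<exists>D. i < n \<longrightarrow> D \<in> Ents i" using Ents_ne by blast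
    then obtain u where "\<And>i. i < n \<Longrightarrow> u i \<in> Ents i" by metis
    then show ?thesis using that unfolding T_def by blast
  qed
  have lin': "\<exists>L\<subseteq>bornology X Ent. (\<forall>a\<in>L. \<forall>b\<in>L. a \<subseteq> b \<or> b \<subseteq> a) \<and> (\<forall>B\<in>bornology X Ent. \<exists>l\<in>L. B \<subseteq> l)"
    using lin unfolding has_linear_base_def X_def Ent_def .
  then obtain L where L1: "L \<subseteq> bornology X Ent" and L2: "\<forall>a\<in>L. \<forall>b\<in>L. a \<subseteq> b \<or> b \<subseteq> a"
    and L3: "\<forall>B\<in>bornology X Ent. \<exists>l\<in>L. B \<subseteq> l"
    by (elim exE conjE)
  define P where "P C \<longleftrightarrow> C \<subseteq> L \<and> (\<forall>l\<in>L. \<exists>c\<in>C. l \<subseteq> c)" for C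
  have "P L" unfolding P_def by blast
  then obtain M where M: "P M" "\<And>C. P C \<Longrightarrow> M \<lesssim> C" using exists_min_lepoll[of P L] by metis
  have M1: "M \<subseteq> L" and M2: "\<forall>l\<in>L. \<exists>m\<in>M. l \<subseteq> m" using M(1) unfolding P_def by auto
  have M3: "\<And>C. C \<subseteq> L \<Longrightarrow> (\<forall>l\<in>L. \<exists>c\<in>C. l \<subseteq> c) \<Longrightarrow> M \<lesssim> C" using M(2) unfolding P_def by blast
  have Mcof: "\<exists>m\<in>M. B \<subseteq> m" if "B \<in> bornology X Ent" for B
  proof -
    from bspec[OF L3 that] obtain l where l: "l \<in> L" "B \<subseteq> l" by (elim bexE)
    from bspec[OF M2 l(1)] obtain m where m: "m \<in> M" "l \<subseteq> m" by (elim bexE)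
    have "B \<subseteq> m" using l(2) m(2) by (rule order_trans)
    then show ?thesis using m(1) by (rule bexI)
  qed
  have sing: "{x} \<in> bornology X Ent" if x: "x \<in> X" for x
  proof -
    obtain E where "E \<in> Ent" "(x, x) \<in> E" using bl_pair[OF bX x x] by blast
    then show ?thesis unfolding bornology_def using x by blast
  qed
  have Minf: "infinite M"
  proof
    assume fin: "finite M"
    obtain m0 where "m0 \<in> M" using Mcof[OF sing[OF pX]] by blast
    then have "M \<noteq> {}" by blast
    moreover have "\<forall>a\<in>M. \<forall>b\<in>M. a \<subseteq> b \<or> b \<subseteq> a" using L2 M1 by blast
    ultimately have UM: "\<Union>M \<in> M" using finite_chain_Union[OF fin] by blast
    have "X \<subseteq> \<Union>M"
    proof
      fix x assume "x \<in> X"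
      then obtain m where "m \<in> M" "{x} \<subseteq> m" using Mcof[OF sing] by blast
      then show "x \<in> \<Union>M" by blast
    qed
    moreover have "\<Union>M \<in> bornology X Ent" using UM M1 L1 by blast
    ultimately have "X \<in> bornology X Ent" using bl_sub_bdd by blast
    then obtain E where E: "E \<in> Ent" "X \<subseteq> E `` {p}" using bl_bdd_at[OF bX _ pX] by blast
    then obtain t where t: "t \<in> T" "E = prod_ent n Xs t" using ET by blast
    have n0: "0 < n" using n2 by simp
    have "Xs 0 \<subseteq> t 0 `` {p 0}"
    proof
      fix z assume z: "z \<in> Xs 0"
      have "p(0 := z) \<in> X" using pE z n0 unfolding X_def prod_carrier_def
        by (auto simp: PiE_def Pi_def extensional_def)
      then have "(p, p(0 := z)) \<in> prod_ent n Xs t" using E t by blast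
      then have "(p 0, z) \<in> t 0" using n0 unfolding prod_ent_def by auto
      then show "z \<in> t 0 `` {p 0}" by blast
    qed
    moreover have "t 0 \<in> Ents 0" using t n0 unfolding T_def by blast
    ultimately have "Xs 0 \<in> bornology (Xs 0) (Ents 0)" unfolding bornology_def using pi[OF n0] by blast
    then show False using ub n0 unfolding unbounded_def by blast
  qed
  have hex: "\<exists>h. h ` M \<subseteq> Ents i \<and> (\<forall>E\<in>Ents i. \<exists>m\<in>M. E \<subseteq> h m)" if i: "i < n" for i
  proof -
    obtain C D where CD: "min_cofinal C (Ents i)" "min_cofinal D (bornology (Xs i) (Ents i))" "C \<approx> D"
      using creg i unfolding cof_regular_def same_cof_def by blast
    let ?Pi = "(\<lambda>m. (\<lambda>x. x i) ` m) ` M"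
    have "cofinal ?Pi (bornology (Xs i) (Ents i))"
      unfolding cofinal_def
    proof
      show "?Pi \<subseteq> bornology (Xs i) (Ents i)"
      proof
        fix q assume "q \<in> ?Pi"
        then obtain m where m: "m \<in> M" "q = (\<lambda>x. x i) ` m" by blast
        then have "m \<in> bornology X Ent" using M1 L1 by blast
        then obtain E where E: "E \<in> Ent" "m \<subseteq> E `` {p}" using bl_bdd_at[OF bX _ pX] by blast
        then obtain t where t: "t \<in> T" "E = prod_ent n Xs t" using ET by blast
        have "q \<subseteq> t i `` {p i}" using m(2) E(2) t(2) i unfolding prod_ent_def by auto
        moreover have "q \<subseteq> Xs i" using m(2) E(2) t(2) i unfolding prod_ent_def prod_carrier_def by auto
        moreover have "t i \<in> Ents i" using t(1) i unfolding T_def by blast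
        ultimately show "q \<in> bornology (Xs i) (Ents i)" unfolding bornology_def using pi[OF i] by blast
      qed
      show "\<forall>q\<in>bornology (Xs i) (Ents i). \<exists>c\<in>?Pi. q \<subseteq> c"
      proof
        fix q assume q: "q \<in> bornology (Xs i) (Ents i)"
        then have qX: "q \<subseteq> Xs i" unfolding bornology_def by blast
        obtain F where F: "F \<in> Ents i" "q \<subseteq> F `` {p i}" using bl_bdd_at[of "Xs i" "Ents i" q "p i"] b i q pi[OF i] by blast
        let ?q = "(\<lambda>z. p(i := z)) ` q"
        let ?t = "t0(i := F)"
        have tT: "?t \<in> T" using t0 F unfolding T_def by auto
        have "?q \<subseteq> prod_ent n Xs ?t `` {p}"
        proof
          fix y assume "y \<in> ?q"
          then obtain z where z: "z \<in> q" "y = p(i := z)" by blast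
          have yX: "y \<in> X" using pE z qX i unfolding X_def prod_carrier_def
            by (auto simp: PiE_def Pi_def extensional_def)
          have "(p j, y j) \<in> ?t j" if j: "j < n" for j
          proof (cases "j = i")
            case True then show ?thesis using z F by auto
          next
            case False
            then have "y j = p j" "?t j = t0 j" using z by auto
            moreover have "t0 j \<in> Ents j" using t0 j unfolding T_def by blast
            ultimately show ?thesis using bl_id[of "Xs j" "Ents j" "t0 j" "p j"] b j pi[OF j] by simp
          qed
          then have "(p, y) \<in> prod_ent n Xs ?t" using pX yX unfolding prod_ent_def X_def by blast
          then show "y \<in> prod_ent n Xs ?t `` {p}" by blast
        qed
        moreover have "prod_ent n Xs ?t `` {p} \<in> bornology X Ent" using bl_ball_bdd[OF bX TE[OF tT] pX] .
        ultimately have "?q \<in> bornology X Ent" using bl_sub_bdd by blast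
        then obtain m where m: "m \<in> M" "?q \<subseteq> m" using Mcof by blast
        have "q \<subseteq> (\<lambda>x. x i) ` m"
        proof
          fix z assume "z \<in> q"
          then have "p(i := z) \<in> m" using m(2) by blast
          then show "z \<in> (\<lambda>x. x i) ` m" by (intro image_eqI[of _ _ "p(i := z)"]) auto
        qed
        then show "\<exists>c\<in>?Pi. q \<subseteq> c" using m(1) by blast
      qed
    qed
    then have "D \<lesssim> ?Pi" using CD(2) unfolding min_cofinal_def by blast
    then have "D \<lesssim> M" using lepoll_trans[OF _ image_lepoll] by blast
    then have CM: "C \<lesssim> M" using CD(3) lepoll_trans1 by blast
    have Ccof: "C \<subseteq> Ents i" "\<forall>E\<in>Ents i. \<exists>c\<in>C. E \<subseteq> c" using CD(1) unfolding min_cofinal_def cofinal_def by auto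
    then have Cne: "C \<noteq> {}" using Ents_ne[OF i] by blast
    obtain h where h: "h ` M = C" using surj_from_lepoll[OF Cne CM] by (elim exE)
    show ?thesis
    proof (intro exI conjI)
      show "h ` M \<subseteq> Ents i" using h Ccof(1) by simp
      show "\<forall>E\<in>Ents i. \<exists>m\<in>M. E \<subseteq> h m"
      proof
        fix E assume "E \<in> Ents i"
        from bspec[OF Ccof(2) this] obtain c where c: "c \<in> C" "E \<subseteq> c" by (elim bexE)
        then obtain m where m: "m \<in> M" "c = h m" using h by (metis imageE)
        then show "\<exists>m\<in>M. E \<subseteq> h m" using c(2) by (intro bexI[of _ m]) simp_all
      qed
    qed
  qed
  have "\<forall>i. \<exists>h. i < n \<longrightarrow> h ` M \<subseteq> Ents i \<and> (\<forall>E\<in>Ents i. \<exists>m\<in>M. E \<subseteq> h m)"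
  proof
    fix i show "\<exists>h. i < n \<longrightarrow> h ` M \<subseteq> Ents i \<and> (\<forall>E\<in>Ents i. \<exists>m\<in>M. E \<subseteq> h m)"
    proof (cases "i < n")
      case True
      from hex[OF True] obtain h where "h ` M \<subseteq> Ents i \<and> (\<forall>E\<in>Ents i. \<exists>m\<in>M. E \<subseteq> h m)" by (elim exE)
      then show ?thesis by (intro exI impI)
    next
      case False then show ?thesis by (intro exI[of _ undefined] impI) (erule notE, assumption)
    qed
  qed
  then obtain hs where hs: "\<And>i. i < n \<Longrightarrow> hs i ` M \<subseteq> Ents i \<and> (\<forall>E\<in>Ents i. \<exists>m\<in>M. E \<subseteq> hs i m)" by metis
  define FM where "FM = PiE {..<n} (\<lambda>_. M)"
  have FMl: "FM \<lesssim> M" unfolding FM_def by (rule finite_power_lepoll[OF Minf])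
  have FMne: "FM \<noteq> {}" unfolding FM_def using Minf by (auto simp: PiE_eq_empty_iff)
  obtain s where s: "s ` M = FM" using surj_from_lepoll[OF FMne FMl] by (elim exE)
  define e where "e m = prod_ent n Xs (\<lambda>i. hs i (s m i))" for m
  have e1: "\<forall>m\<in>M. e m \<in> Ent"
  proof
    fix m assume m: "m \<in> M"
    then have "s m \<in> FM" using s by blast
    then have "\<forall>i<n. s m i \<in> M" unfolding FM_def by auto
    then have "(\<lambda>i. hs i (s m i)) \<in> T" using hs unfolding T_def by blast
    then show "e m \<in> Ent" unfolding e_def by (rule TE)
  qed
  have e2: "\<forall>E\<in>Ent. \<exists>m\<in>M. E \<subseteq> e m"
  proof
    fix E assume "E \<in> Ent"
    then obtain t where t: "t \<in> T" "E = prod_ent n Xs t" using ET by blast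
    have "\<forall>i. \<exists>m. i < n \<longrightarrow> m \<in> M \<and> t i \<subseteq> hs i m"
    proof
      fix i show "\<exists>m. i < n \<longrightarrow> m \<in> M \<and> t i \<subseteq> hs i m"
      proof (cases "i < n")
        case True
        then have "t i \<in> Ents i" using t(1) unfolding T_def by simp
        from bspec[OF conjunct2[OF hs[OF True]] this] obtain m where "m \<in> M" "t i \<subseteq> hs i m" by (elim bexE)
        then show ?thesis by (intro exI impI conjI)
      next
        case False then show ?thesis by (intro exI[of _ undefined] impI) (erule notE, assumption)
      qed
    qed
    then obtain mf where mf: "\<And>i. i < n \<Longrightarrow> mf i \<in> M \<and> t i \<subseteq> hs i (mf i)" by metis
    have "restrict mf {..<n} \<in> FM" unfolding FM_def using mf by auto
    then obtain m where m: "m \<in> M" "s m = restrict mf {..<n}" using s by (metis imageE)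
    have "E \<subseteq> e m" unfolding t(2) e_def
    proof (rule prod_ent_mono)
      fix i assume "i < n"
      then show "t i \<subseteq> hs i (s m i)" using m(2) mf by simp
    qed
    then show "\<exists>m\<in>M. E \<subseteq> e m" using m(1) by blast
  qed
  have "normal_ballean X Ent"
    using normal_from_chain[OF bX L1 L2 L3 M1 M3 Minf e1 e2] .
  then show ?thesis unfolding X_def Ent_def .
qed


theorem theorem1p8:
  fixes n :: nat and Xs :: "nat \<Rightarrow> 'a set" and Ents :: "nat \<Rightarrow> ('a \<times> 'a) set set"
  assumes "n \<ge> 2"
    and "\<forall>i<n. ballean (Xs i) (Ents i) \<and> unbounded (Xs i) (Ents i)"
  shows "(normal_ballean (prod_carrier n Xs) (prod_ents n Xs Ents) \<longrightarrow>
            has_linear_base (bornology (prod_carrier n Xs) (prod_ents n Xs Ents)))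
       \<and> ((\<forall>i<n. cof_regular (Xs i) (Ents i)) \<and>
            has_linear_base (bornology (prod_carrier n Xs) (prod_ents n Xs Ents)) \<longrightarrow>
            normal_ballean (prod_carrier n Xs) (prod_ents n Xs Ents))"
proof -
  have b: "\<forall>i<n. ballean (Xs i) (Ents i)" and ub: "\<forall>i<n. unbounded (Xs i) (Ents i)"
    using assms(2) by auto
  show ?thesis
  proof (cases "\<forall>i<n. Xs i \<noteq> {}")
    case True
    show ?thesis
    proof (intro conjI impI)
      assume "normal_ballean (prod_carrier n Xs) (prod_ents n Xs Ents)"
      then show "has_linear_base (bornology (prod_carrier n Xs) (prod_ents n Xs Ents))"
        using part_a[OF assms(1) b ub True] by blast
    next
      assume h: "(\<forall>i<n. cof_regular (Xs i) (Ents i)) \<and>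
            has_linear_base (bornology (prod_carrier n Xs) (prod_ents n Xs Ents))"
      show "normal_ballean (prod_carrier n Xs) (prod_ents n Xs Ents)"
        using part_b[OF assms(1) b ub True] h by blast
    qed
  next
    case False
    then have X0: "prod_carrier n Xs = {}" unfolding prod_carrier_def by (auto simp: PiE_eq_empty_iff)
    have B0: "bornology (prod_carrier n Xs) (prod_ents n Xs Ents) = {}"
      unfolding X0 bornology_def by blast
    have "has_linear_base (bornology (prod_carrier n Xs) (prod_ents n Xs Ents))"
      unfolding B0 has_linear_base_def by blast
    moreover have "normal_ballean (prod_carrier n Xs) (prod_ents n Xs Ents)"
      unfolding normal_ballean_def
    proof (intro allI impI)
      fix A B assume AX: "A \<subseteq> prod_carrier n Xs" and "B \<subseteq> prod_carrier n Xs"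
        and ad: "asymp_disjoint (prod_carrier n Xs) (prod_ents n Xs Ents) A B"
      have "prod_ents n Xs Ents = {}" using ad unfolding asymp_disjoint_def B0 by blast
      then show "\<exists>U V. U \<subseteq> prod_carrier n Xs \<and> V \<subseteq> prod_carrier n Xs \<and>
          asymp_nbhd (prod_carrier n Xs) (prod_ents n Xs Ents) U A \<and>
          asymp_nbhd (prod_carrier n Xs) (prod_ents n Xs Ents) V B \<and> U \<inter> V = {}"
        unfolding asymp_nbhd_def X0 by blast
    qed
    ultimately show ?thesis by blast
  qed
qed

end
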